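(* Assume (P1) and (A3). Then for every $q\in\mathbb{R}^n$ and every $p=(p_1,\dots,p_N)$ with $p_i\in\mathbb{R}^n$, the linear system $$\sum_{j=0}^ND_{ij}X_j-A_iX_i=p_i\ (1\le i\le N),\qquad X_0=q,$$ has a unique solution $X_0,\dots,X_N\in\mathbb{R}^n$, and it satisfies $$\|X_j\|_\infty\le 4\|p\|_\infty+2\|q\|_\infty,\qquad 0\le j\le N,$$ where for vectors $\|\cdot\|_\infty$ denotes the maximum absolute entry (for $p$, over all $nN$ entries).
   Context: Radau collocation data: for an integer $N\ge 2$, let $-1<\tau_1<\dots<\tau_N=1$ be the nodes of the $N$-point Gauss–Radau quadrature rule on $[-1,1]$ with fixed node $+1$, and set $\tau_0=-1$. For $0\le j\le N$ let $L_j(\tau)=\prod_{i=0,i\ne j}^{N}\frac{\tau-\tau_i}{\tau_j-\tau_i}$ and let $D$ be the $N\times(N+1)$ matrix $D_{ij}=L_j'(\tau_i)$, $1\le i\le N$, $0\le j\le N$; $D_{1:N}$ denotes the $N\times N$ submatrix formed by columns $1,\dots,N$. For a matrix, $\|\cdot\|_\infty$ is the largest absolute row sum. (P1): $D_{1:N}$ is invertible and $\|D_{1:N}^{-1}\|_\infty\le 2$. Here $f:\mathbb{R}^n\times\mathbb{R}^m\to\mathbb{R}^n$ is continuously differentiable, $(x^*,u^* )$ is a given continuous state–control pair on $[-1,1]$, and $A_i=\nabla_xf(x^*(\tau_i),u^*(\tau_i))$ is the $n\times n$ Jacobian. (A3): $\|\nabla_xf(x^*(t),u^*(t))\|_\infty\le1/4$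 and $\|\nabla_xf(x^*(t),u^*(t))^{\mathsf T}\|_\infty\le1/4$ for all $t\in[-1,1]$. *)

theory Defs
  imports "HOL-Analysis.Analysis" "HOL-Computational_Algebra.Polynomial"
begin

definition radau_nodes :: "nat \<Rightarrow> (nat \<Rightarrow> real) \<Rightarrow> bool" where
  "radau_nodes N tau \<longleftrightarrow>
     -1 < tau 1 \<and> (\<forall>i\<in>{1..<N}. tau i < tau (Suc i)) \<and> tau N = 1 \<and>
     (\<exists>w :: nat \<Rightarrow> real. \<forall>P :: real poly. degree P \<le> 2 * N - 2 \<longrightarrow>
        integral {-1..1} (poly P) = (\<Sum>i=1..N. w i * poly P (tau i)))"

definition lagrange_basis :: "(nat \<Rightarrow> real) \<Rightarrow> nat \<Rightarrow> nat \<Rightarrow> real \<Rightarrow> real" where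
  "lagrange_basis tau N j t = (\<Prod>i\<in>{0..N} - {j}. (t - tau i) / (tau j - tau i))"

definition radau_D :: "(nat \<Rightarrow> real) \<Rightarrow> nat \<Rightarrow> nat \<Rightarrow> nat \<Rightarrow> real" where
  "radau_D tau N i j = deriv (lagrange_basis tau N j) (tau i)"

definition radau_P1 :: "(nat \<Rightarrow> real) \<Rightarrow> nat \<Rightarrow> bool" where
  "radau_P1 tau N \<longleftrightarrow>
     (\<exists>M :: nat \<Rightarrow> nat \<Rightarrow> real.
        (\<forall>i\<in>{1..N}. \<forall>k\<in>{1..N}. (\<Sum>j=1..N. radau_D tau N i j * M j k) = (if i = k then 1 else 0)) \<and>
        (\<forall>i\<in>{1..N}. \<forall>k\<in>{1..N}. (\<Sum>j=1..N. M i j * radau_D tau N j k) = (if i = k then 1 else 0)) \<and>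
        (\<forall>i\<in>{1..N}. (\<Sum>k=1..N. \<bar>M i k\<bar>) \<le> 2))"

definition vec_inf_norm :: "real^'n \<Rightarrow> real" where
  "vec_inf_norm x = (MAX i\<in>UNIV. \<bar>x $ i\<bar>)"

definition mat_inf_norm :: "real^'n^'m \<Rightarrow> real" where
  "mat_inf_norm A = (MAX i\<in>UNIV. \<Sum>j\<in>UNIV. \<bar>A $ i $ j\<bar>)"

end

theory Submission
  imports Defs "HOL-Computational_Algebra.Polynomial"
begin



definition LP :: "(nat \<Rightarrow> real) \<Rightarrow> nat \<Rightarrow> nat \<Rightarrow> real poly" where
  "LP tau N j = (\<Prod>i\<in>{0..N} - {j}. smult (1 / (tau j - tau i)) [:- tau i, 1:])"

lemma poly_LP: "poly (LP tau N j) = lagrange_basis tau N j"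
  by (auto simp: LP_def lagrange_basis_def poly_prod fun_eq_iff diff_divide_distrib intro!: prod.cong)

lemma deg_LP: "degree (LP tau N j) \<le> N" if "j \<le> N"
proof -
  have "degree (LP tau N j) \<le> (\<Sum>i\<in>{0..N} - {j}. degree (smult (1 / (tau j - tau i)) [:- tau i, 1:]))"
    unfolding LP_def by (rule order.trans[OF degree_prod_sum_le]) (auto simp: o_def)
  also have "\<dots> \<le> (\<Sum>i\<in>{0..N} - {j}. 1)"
    by (intro sum_mono) (auto simp: degree_smult_le order.trans[OF degree_smult_le])
  also have "\<dots> \<le> N" using that by simp
  finally show ?thesis .
qed

lemma LP_node: assumes inj: "inj_on tau {0..N}" and k: "k \<in> {0..N}" and j: "j \<in> {0..N}"
  shows "lagrange_basis tau N j (tau k) = (if j = k then 1 else 0)"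
proof (cases "j = k")
  case True
  have "tau j \<noteq> tau i" if "i \<in> {0..N} - {j}" for i using inj that j by (auto dest: inj_onD)
  then show ?thesis using True by (auto simp: lagrange_basis_def intro!: prod.neutral)
next
  case False
  then show ?thesis using k by (auto simp: lagrange_basis_def intro!: prod_zero bexI[of _ k])
qed

lemma sum_LP: assumes inj: "inj_on tau {0..N}"
  shows "(\<Sum>j=0..N. LP tau N j) = 1"
proof (rule poly_eqI_degree[where A = "tau ` {0..N}"])
  fix x assume "x \<in> tau ` {0..N}"
  then obtain k where k: "k \<in> {0..N}" "x = tau k" by auto
  have "poly (\<Sum>j=0..N. LP tau N j) x = (\<Sum>j=0..N. if j = k then 1 else 0)"
    using k inj by (auto simp: poly_sum poly_LP LP_node intro!: sum.cong)
  also have "\<dots> = 1" using k by simp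
  finally show "poly (\<Sum>j=0..N. LP tau N j) x = poly 1 x" by simp
next
  have c: "card (tau ` {0..N}) = Suc N" using inj by (simp add: card_image)
  have "degree (\<Sum>j=0..N. LP tau N j) \<le> N"
    by (rule degree_sum_le) (auto simp: deg_LP)
  then show "degree (\<Sum>j=0..N. LP tau N j) < card (tau ` {0..N})" using c by simp
  show "degree (1::real poly) < card (tau ` {0..N})" using c by simp
qed

lemma sum_D_zero: assumes inj: "inj_on tau {0..N}"
  shows "(\<Sum>j=0..N. radau_D tau N i j) = 0"
proof -
  have "radau_D tau N i j = poly (pderiv (LP tau N j)) (tau i)" for j
    unfolding radau_D_def poly_LP[symmetric]
    by (rule DERIV_imp_deriv) (rule poly_DERIV)
  then have "(\<Sum>j=0..N. radau_D tau N i j) = poly (\<Sum>j=0..N. pderiv (LP tau N j)) (tau i)"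
    by (simp add: poly_sum)
  also have "(\<Sum>j=0..N. pderiv (LP tau N j)) = pderiv (\<Sum>j=0..N. LP tau N j)"
    using higher_pderiv_sum[of 1 "LP tau N" "{0..N}"] by simp
  finally show ?thesis using sum_LP[OF inj] by simp
qed



lemma vn_comp: "\<bar>x $ c\<bar> \<le> vec_inf_norm x"
  unfolding vec_inf_norm_def by (rule Max_ge) auto

lemma vn_nonneg: "0 \<le> vec_inf_norm x"
  using vn_comp[of x] by (meson abs_ge_zero order.trans)

lemma vn_le: "(\<And>c. \<bar>x $ c\<bar> \<le> b) \<Longrightarrow> vec_inf_norm x \<le> b"
  unfolding vec_inf_norm_def by (subst Max_le_iff) auto

lemma vn_zero: "vec_inf_norm x \<le> 0 \<Longrightarrow> x = 0"
  using vn_comp[of x] by (metis abs_le_zero_iff order.trans vec_eq_iff zero_index)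

lemma vn_add: "vec_inf_norm (x + y) \<le> vec_inf_norm x + vec_inf_norm y"
  by (rule vn_le) (metis abs_triangle_ineq add_mono order.trans vector_add_component vn_comp)

lemma vn_scale: "vec_inf_norm (a *\<^sub>R x) \<le> \<bar>a\<bar> * vec_inf_norm x"
  by (rule vn_le) (simp add: abs_mult mult_left_mono vn_comp)

lemma vn_sum: "finite S \<Longrightarrow> vec_inf_norm (\<Sum>l\<in>S. v l) \<le> (\<Sum>l\<in>S. vec_inf_norm (v l))"
proof (induction S rule: finite_induct)
  case empty then show ?case by (simp add: vn_le)
next
  case (insert a S)
  then show ?case by (simp) (meson add_left_mono order.trans vn_add)
qed

lemma vn_sum_scaled:
  assumes "finite S" "\<And>l. l \<in> S \<Longrightarrow> vec_inf_norm (v l) \<le> e"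
  shows "vec_inf_norm (\<Sum>l\<in>S. c l *\<^sub>R v l) \<le> (\<Sum>l\<in>S. \<bar>c l\<bar>) * e"
proof -
  have "vec_inf_norm (\<Sum>l\<in>S. c l *\<^sub>R v l) \<le> (\<Sum>l\<in>S. vec_inf_norm (c l *\<^sub>R v l))"
    by (rule vn_sum[OF assms(1)])
  also have "\<dots> \<le> (\<Sum>l\<in>S. \<bar>c l\<bar> * e)"
    by (intro sum_mono) (meson abs_ge_zero assms(2) mult_left_mono order.trans vn_scale)
  finally show ?thesis by (simp add: sum_distrib_right)
qed

lemma vn_mat: "vec_inf_norm (A *v x) \<le> mat_inf_norm A * vec_inf_norm x"
proof (rule vn_le)
  fix c
  have "\<bar>(A *v x) $ c\<bar> = \<bar>\<Sum>j\<in>UNIV. A $ c $ j * x $ j\<bar>" by (simp add: matrix_vector_mult_def)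
  also have "\<dots> \<le> (\<Sum>j\<in>UNIV. \<bar>A $ c $ j\<bar> * vec_inf_norm x)"
    by (rule order.trans[OF sum_abs]) (auto intro!: sum_mono simp: abs_mult mult_left_mono vn_comp)
  also have "\<dots> = (\<Sum>j\<in>UNIV. \<bar>A $ c $ j\<bar>) * vec_inf_norm x" by (simp add: sum_distrib_right)
  also have "\<dots> \<le> mat_inf_norm A * vec_inf_norm x"
    unfolding mat_inf_norm_def by (intro mult_right_mono vn_nonneg Max_ge) auto
  finally show "\<bar>(A *v x) $ c\<bar> \<le> mat_inf_norm A * vec_inf_norm x" .
qed

lemma norm_vn: "norm (x::real^'n) \<le> real CARD('n) * vec_inf_norm x"
proof -
  have "norm x \<le> (\<Sum>i\<in>UNIV. \<bar>x$i\<bar>)" by (rule norm_le_l1_cart)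
  also have "\<dots> \<le> (\<Sum>i\<in>(UNIV::'n set). vec_inf_norm x)" by (intro sum_mono vn_comp)
  finally show ?thesis by simp
qed



lemma swap_sR:
  fixes v :: "nat \<Rightarrow> real^'n"
  shows "(\<Sum>j\<in>S. c j *\<^sub>R (\<Sum>l\<in>T. d j l *\<^sub>R v l)) = (\<Sum>l\<in>T. (\<Sum>j\<in>S. c j * d j l) *\<^sub>R v l)"
  by (simp add: scaleR_sum_right scaleR_sum_left sum.swap[of _ S T])

lemma delta_sR:
  fixes v :: "nat \<Rightarrow> real^'n"
  assumes "i \<in> S" "finite S"
  shows "(\<Sum>l\<in>S. (if i = l then 1 else 0) *\<^sub>R v l) = v i"
proof -
  have "(\<Sum>l\<in>S. (if i = l then 1 else 0) *\<^sub>R v l) = (\<Sum>l\<in>S. if i = l then v l else 0)"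
    by (intro sum.cong) auto
  also have "\<dots> = v i" using assms by simp
  finally show ?thesis .
qed

lemma main_abs:
  fixes A :: "nat \<Rightarrow> real^'n^'n" and D M :: "nat \<Rightarrow> nat \<Rightarrow> real"
    and q :: "real^'n" and p :: "nat \<Rightarrow> real^'n"
  assumes N1: "N \<ge> 1"
    and Dsum: "\<And>i. i \<in> {1..N} \<Longrightarrow> (\<Sum>j=0..N. D i j) = 0"
    and DM: "\<forall>i\<in>{1..N}. \<forall>k\<in>{1..N}. (\<Sum>j=1..N. D i j * M j k) = (if i = k then 1 else 0)"
    and MD: "\<forall>i\<in>{1..N}. \<forall>k\<in>{1..N}. (\<Sum>j=1..N. M i j * D j k) = (if i = k then 1 else 0)"
    and Mrow: "\<forall>i\<in>{1..N}. (\<Sum>k=1..N. \<bar>M i k\<bar>) \<le> 2"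
    and An: "\<And>i. i \<in> {1..N} \<Longrightarrow> mat_inf_norm (A i) \<le> 1/4"
  shows "\<exists>X :: nat \<Rightarrow> real^'n.
           ((\<forall>i\<in>{1..N}. (\<Sum>j=0..N. D i j *\<^sub>R X j) - A i *v X i = p i) \<and> X 0 = q)
         \<and> (\<forall>Y :: nat \<Rightarrow> real^'n.
              ((\<forall>i\<in>{1..N}. (\<Sum>j=0..N. D i j *\<^sub>R Y j) - A i *v Y i = p i) \<and> Y 0 = q)
              \<longrightarrow> (\<forall>j\<in>{0..N}. Y j = X j))
         \<and> (\<forall>j\<in>{0..N}. vec_inf_norm (X j)
              \<le> 4 * (MAX i\<in>{1..N}. vec_inf_norm (p i)) + 2 * vec_inf_norm q)"
proof -
  define T where "T X j = (if j = 0 then q else q + (\<Sum>l=1..N. M j l *\<^sub>R (p l + A l *v X l)))"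
    for X :: "nat \<Rightarrow> real^'n" and j
  define sol where "sol Y \<longleftrightarrow> (\<forall>i\<in>{1..N}. (\<Sum>j=0..N. D i j *\<^sub>R Y j) - A i *v Y i = p i) \<and> Y 0 = q"
    for Y :: "nat \<Rightarrow> real^'n"
  define fp where "fp Y \<longleftrightarrow> Y 0 = q \<and> (\<forall>j\<in>{1..N}. Y j = T Y j)" for Y
  have Nne: "{1..N} \<noteq> {}" using N1 by auto
  have red: "(\<Sum>j=0..N. D i j *\<^sub>R Y j) = (\<Sum>j=1..N. D i j *\<^sub>R (Y j - q))"
    if "Y 0 = q" "i \<in> {1..N}" for Y i
  proof -
    have "(\<Sum>j=0..N. D i j *\<^sub>R Y j) = D i 0 *\<^sub>R q + (\<Sum>j=1..N. D i j *\<^sub>R Y j)"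
      using that by (simp add: sum.atLeast_Suc_atMost)
    moreover have "(\<Sum>j=0..N. D i j) = D i 0 + (\<Sum>j=1..N. D i j)"
      by (simp add: sum.atLeast_Suc_atMost)
    moreover have "(\<Sum>j=1..N. D i j *\<^sub>R (Y j - q)) = (\<Sum>j=1..N. D i j *\<^sub>R Y j) - (\<Sum>j=1..N. D i j) *\<^sub>R q"
      by (simp add: scaleR_right_diff_distrib sum_subtractf scaleR_sum_left)
    moreover have "D i 0 = - (\<Sum>j=1..N. D i j)"
      using Dsum[OF that(2)] calculation(2) by linarith
    ultimately show ?thesis by simp
  qed
  have equiv: "sol Y \<longleftrightarrow> fp Y" for Y
  proof
    assume s: "sol Y"
    then have Y0: "Y 0 = q" by (simp add: sol_def)
    have ri: "(\<Sum>j=1..N. D i j *\<^sub>R (Y j - q)) = p i + A i *v Y i" if "i \<in> {1..N}" for i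
    proof -
      have "(\<Sum>j=0..N. D i j *\<^sub>R Y j) - A i *v Y i = p i" using s that unfolding sol_def by blast
      then show ?thesis using red[of Y i, OF Y0 that] by (simp add: diff_eq_eq)
    qed
    have "Y l = T Y l" if l: "l \<in> {1..N}" for l
    proof -
      have "(\<Sum>i=1..N. M l i *\<^sub>R (p i + A i *v Y i))
          = (\<Sum>i=1..N. M l i *\<^sub>R (\<Sum>j=1..N. D i j *\<^sub>R (Y j - q)))"
        using ri by (intro sum.cong) auto
      also have "\<dots> = (\<Sum>j=1..N. (\<Sum>i=1..N. M l i * D i j) *\<^sub>R (Y j - q))" by (rule swap_sR)
      also have "\<dots> = (\<Sum>j=1..N. (if l = j then 1 else 0) *\<^sub>R (Y j - q))"
        using MD l by (intro sum.cong) auto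
      also have "\<dots> = Y l - q" using l by (intro delta_sR) auto
      finally show ?thesis using l by (simp add: T_def)
    qed
    then show "fp Y" using Y0 by (simp add: fp_def)
  next
    assume f: "fp Y"
    then have Y0: "Y 0 = q" by (simp add: fp_def)
    have "(\<Sum>j=0..N. D i j *\<^sub>R Y j) - A i *v Y i = p i" if i: "i \<in> {1..N}" for i
    proof -
      have "(\<Sum>j=1..N. D i j *\<^sub>R (Y j - q))
          = (\<Sum>j=1..N. D i j *\<^sub>R (\<Sum>l=1..N. M j l *\<^sub>R (p l + A l *v Y l)))"
        using f by (intro sum.cong) (auto simp: fp_def T_def)
      also have "\<dots> = (\<Sum>l=1..N. (\<Sum>j=1..N. D i j * M j l) *\<^sub>R (p l + A l *v Y l))" by (rule swap_sR)
      also have "\<dots> = (\<Sum>l=1..N. (if i = l then 1 else 0) *\<^sub>R (p l + A l *v Y l))"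
        using DM i by (intro sum.cong) auto
      also have "\<dots> = p i + A i *v Y i" using i by (intro delta_sR) auto
      finally show ?thesis using red[of Y i, OF Y0 i] by simp
    qed
    then show "sol Y" using Y0 by (simp add: sol_def)
  qed
  have contr: "\<forall>j\<in>{1..N}. vec_inf_norm (T X j - T Y j) \<le> e/2"
    if h: "\<forall>j\<in>{1..N}. vec_inf_norm (X j - Y j) \<le> e" for X Y e
  proof
    fix j assume j: "j \<in> {1..N}"
    have e0: "0 \<le> e" using h Nne vn_nonneg by (meson all_not_in_conv order.trans)
    have "T X j - T Y j = (\<Sum>l=1..N. M j l *\<^sub>R (A l *v (X l - Y l)))"
      using j by (simp add: T_def sum_subtractf[symmetric] algebra_simps)
    also have "vec_inf_norm \<dots> \<le> (\<Sum>l=1..N. \<bar>M j l\<bar>) * (e/4)"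
    proof (rule vn_sum_scaled)
      fix l assume l: "l \<in> {1..N}"
      have "vec_inf_norm (A l *v (X l - Y l)) \<le> mat_inf_norm (A l) * vec_inf_norm (X l - Y l)"
        by (rule vn_mat)
      also have "\<dots> \<le> 1/4 * e"
        using An[OF l] h l vn_nonneg by (intro mult_mono) auto
      finally show "vec_inf_norm (A l *v (X l - Y l)) \<le> e/4" by simp
    qed simp
    also have "\<dots> \<le> 2 * (e/4)" using Mrow j e0 by (intro mult_right_mono) auto
    finally show "vec_inf_norm (T X j - T Y j) \<le> e/2" by simp
  qed
  have uniq: "X j = Y j" if "fp X" "fp Y" "j \<in> {0..N}" for X Y j
  proof -
    define e where "e = (MAX j\<in>{1..N}. vec_inf_norm (X j - Y j))"
    have le: "\<forall>j\<in>{1..N}. vec_inf_norm (X j - Y j) \<le> e" unfolding e_def by auto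
    have "\<forall>j\<in>{1..N}. vec_inf_norm (X j - Y j) \<le> e/2"
      using contr[OF le] that(1,2) unfolding fp_def by auto
    then have "e \<le> e/2" unfolding e_def using Nne by (subst Max_le_iff) auto
    moreover have "e \<ge> 0" using le Nne vn_nonneg by (meson all_not_in_conv order.trans)
    ultimately have "e \<le> 0" by simp
    show ?thesis
    proof (cases "j = 0")
      case True then show ?thesis using that unfolding fp_def by simp
    next
      case False
      then have "j \<in> {1..N}" using that(3) by auto
      then have "vec_inf_norm (X j - Y j) \<le> 0" using le \<open>e \<le> 0\<close> by fastforce
      then have "X j - Y j = 0" by (rule vn_zero)
      then show ?thesis by simp
    qed
  qed
  have bound: "vec_inf_norm (X j) \<le> 4 * (MAX i\<in>{1..N}. vec_inf_norm (p i)) + 2 * vec_inf_norm q"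
    if "fp X" "j \<in> {0..N}" for X j
  proof -
    define P where "P = (MAX i\<in>{1..N}. vec_inf_norm (p i))"
    define K where "K = (MAX j\<in>{1..N}. vec_inf_norm (X j))"
    have Pl: "vec_inf_norm (p l) \<le> P" if "l \<in> {1..N}" for l unfolding P_def using that by auto
    have Kl: "vec_inf_norm (X l) \<le> K" if "l \<in> {1..N}" for l unfolding K_def using that by auto
    have P0: "P \<ge> 0" using Pl[of 1] N1 vn_nonneg[of "p 1"] by auto
    have K0: "K \<ge> 0" using Kl[of 1] N1 vn_nonneg[of "X 1"] by auto
    have "vec_inf_norm (X l) \<le> vec_inf_norm q + 2 * (P + K/4)" if l: "l \<in> {1..N}" for l
    proof -
      have "vec_inf_norm (X l) = vec_inf_norm (q + (\<Sum>i=1..N. M l i *\<^sub>R (p i + A i *v X i)))"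
        using \<open>fp X\<close> l by (simp add: fp_def T_def)
      also have "\<dots> \<le> vec_inf_norm q + vec_inf_norm (\<Sum>i=1..N. M l i *\<^sub>R (p i + A i *v X i))"
        by (rule vn_add)
      also have "vec_inf_norm (\<Sum>i=1..N. M l i *\<^sub>R (p i + A i *v X i)) \<le> (\<Sum>i=1..N. \<bar>M l i\<bar>) * (P + K/4)"
      proof (rule vn_sum_scaled)
        fix i assume i: "i \<in> {1..N}"
        have "vec_inf_norm (A i *v X i) \<le> mat_inf_norm (A i) * vec_inf_norm (X i)" by (rule vn_mat)
        also have "\<dots> \<le> 1/4 * K" using An[OF i] Kl[OF i] vn_nonneg by (intro mult_mono) auto
        finally show "vec_inf_norm (p i + A i *v X i) \<le> P + K/4"
          using vn_add[of "p i" "A i *v X i"] Pl[OF i] by simp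
      qed simp
      also have "(\<Sum>i=1..N. \<bar>M l i\<bar>) * (P + K/4) \<le> 2 * (P + K/4)"
        using Mrow l P0 K0 by (intro mult_right_mono) auto
      finally show ?thesis by simp
    qed
    then have "K \<le> vec_inf_norm q + 2 * (P + K/4)" unfolding K_def using Nne by (subst Max_le_iff) auto
    then have "K \<le> 4 * P + 2 * vec_inf_norm q" using vn_nonneg[of q] by simp
    moreover have "vec_inf_norm q \<le> 4 * P + 2 * vec_inf_norm q" using P0 vn_nonneg[of q] by simp
    ultimately show ?thesis
    proof (cases "j = 0")
      case True then show ?thesis using that \<open>vec_inf_norm q \<le> 4 * P + 2 * vec_inf_norm q\<close>
        unfolding P_def fp_def by simp
    next
      case False
      then have "j \<in> {1..N}" using that(2) by auto
      then show ?thesis using Kl[of j] \<open>K \<le> 4 * P + 2 * vec_inf_norm q\<close> unfolding P_def by linarith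
    qed
  qed
  have ex: "\<exists>X. fp X"
  proof -
    define Xs where "Xs k = (T ^^ k) (\<lambda>j. q)" for k
    have XsS: "Xs (Suc k) = T (Xs k)" for k by (simp add: Xs_def)
    have X00: "Xs 0 j = q" for j by (simp add: Xs_def)
    define B where "B = (\<Sum>j=1..N. vec_inf_norm (Xs 1 j - Xs 0 j))"
    have step: "\<forall>j\<in>{1..N}. vec_inf_norm (Xs (Suc k) j - Xs k j) \<le> B / 2^k" for k
    proof (induction k)
      case 0 show ?case unfolding B_def by (auto intro!: member_le_sum vn_nonneg)
    next
      case (Suc k)
      have "\<forall>j\<in>{1..N}. vec_inf_norm (T (Xs (Suc k)) j - T (Xs k) j) \<le> (B/2^k)/2"
        by (rule contr[OF Suc.IH])
      then show ?case by (simp add: XsS mult.commute)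
    qed
    define d where "d k j = Xs (Suc k) j - Xs k j" for k j
    have summ: "summable (\<lambda>k. d k j)" if j: "j\<in>{1..N}" for j
    proof (rule summable_comparison_test)
      show "\<exists>N0. \<forall>n\<ge>N0. norm (d n j) \<le> real CARD('n) * B * (1/2)^n"
      proof (intro exI allI impI)
        fix n
        have "norm (d n j) \<le> real CARD('n) * vec_inf_norm (d n j)" by (rule norm_vn)
        also have "\<dots> \<le> real CARD('n) * (B / 2^n)"
          using step[of n] j by (intro mult_left_mono) (auto simp: d_def)
        finally show "norm (d n j) \<le> real CARD('n) * B * (1/2)^n" by (simp add: power_one_over)
      qed
      show "summable (\<lambda>n. real CARD('n) * B * (1/2)^n)"
        by (intro summable_mult summable_geometric) simp
    qed
    define Xl where "Xl j = (if j = 0 then q else q + suminf (\<lambda>k. d k j))" for j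
    have lim: "(\<lambda>k. Xs k j) \<longlonglongrightarrow> Xl j" if j: "j\<in>{1..N}" for j
    proof -
      have e: "Xs k j = q + (\<Sum>i<k. d i j)" for k
        using sum_lessThan_telescope[of "\<lambda>i. Xs i j" k] by (simp add: d_def X00)
      show ?thesis unfolding e using j
        by (simp add: Xl_def tendsto_add[OF tendsto_const summable_LIMSEQ[OF summ[OF j]]])
    qed
    have "Xl j = T Xl j" if j: "j\<in>{1..N}" for j
    proof -
      have 1: "(\<lambda>k. Xs (Suc k) j) \<longlonglongrightarrow> Xl j" using lim[OF j] by (rule LIMSEQ_Suc)
      have "(\<lambda>k. q + (\<Sum>l=1..N. M j l *\<^sub>R (p l + A l *v Xs k l)))
              \<longlonglongrightarrow> q + (\<Sum>l=1..N. M j l *\<^sub>R (p l + A l *v Xl l))"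
        by (intro tendsto_intros bounded_linear.tendsto[OF matrix_vector_mul_bounded_linear] lim) auto
      then have 2: "(\<lambda>k. Xs (Suc k) j) \<longlonglongrightarrow> T Xl j" using j by (simp add: XsS T_def)
      show ?thesis using LIMSEQ_unique[OF 1 2] .
    qed
    then have "fp Xl" by (simp add: fp_def Xl_def)
    then show ?thesis by blast
  qed
  then obtain X where X: "fp X" by blast
  have sX: "sol X" using equiv X by simp
  have u: "\<forall>Y. sol Y \<longrightarrow> (\<forall>j\<in>{0..N}. Y j = X j)" using uniq X equiv by blast
  have b: "\<forall>j\<in>{0..N}. vec_inf_norm (X j) \<le> 4 * (MAX i\<in>{1..N}. vec_inf_norm (p i)) + 2 * vec_inf_norm q"
    using bound X by blast
  show ?thesis using sX u b unfolding sol_def by blast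
qed

theorem lemma4p1:
  fixes N :: nat
    and tau :: "nat \<Rightarrow> real"
    and f :: "(real^'n) \<times> (real^'m) \<Rightarrow> real^'n"
    and f' :: "(real^'n) \<times> (real^'m) \<Rightarrow> ((real^'n) \<times> (real^'m)) \<Rightarrow>\<^sub>L (real^'n)"
    and xs :: "real \<Rightarrow> real^'n"
    and us :: "real \<Rightarrow> real^'m"
    and q :: "real^'n"
    and p :: "nat \<Rightarrow> real^'n"
  assumes N2: "N \<ge> 2"
    and nodes: "radau_nodes N tau"
    and tau0: "tau 0 = -1"
    and P1: "radau_P1 tau N"
    and f_deriv: "\<And>z. (f has_derivative blinfun_apply (f' z)) (at z)"
    and f'_cont: "continuous_on UNIV f'"
    and xs_cont: "continuous_on {-1..1} xs"
    and us_cont: "continuous_on {-1..1} us"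
    and A3: "\<And>t. t \<in> {-1..1} \<Longrightarrow>
               mat_inf_norm (jacobian (\<lambda>x. f (x, us t)) (at (xs t))) \<le> 1/4 \<and>
               mat_inf_norm (transpose (jacobian (\<lambda>x. f (x, us t)) (at (xs t)))) \<le> 1/4"
  shows "\<exists>X :: nat \<Rightarrow> real^'n.
           ((\<forall>i\<in>{1..N}. (\<Sum>j=0..N. radau_D tau N i j *\<^sub>R X j)
                 - jacobian (\<lambda>x. f (x, us (tau i))) (at (xs (tau i))) *v X i = p i)
            \<and> X 0 = q)
         \<and> (\<forall>Y :: nat \<Rightarrow> real^'n.
              ((\<forall>i\<in>{1..N}. (\<Sum>j=0..N. radau_D tau N i j *\<^sub>R Y j)
                 - jacobian (\<lambda>x. f (x, us (tau i))) (at (xs (tau i))) *v Y i = p i)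
               \<and> Y 0 = q) \<longrightarrow> (\<forall>j\<in>{0..N}. Y j = X j))
         \<and> (\<forall>j\<in>{0..N}. vec_inf_norm (X j)
              \<le> 4 * (MAX i\<in>{1..N}. vec_inf_norm (p i)) + 2 * vec_inf_norm q)"
  proof -
  have lt: "tau i < tau k" if "i < k" "k \<le> N" for i k
    using that
  proof (induction k)
    case 0 then show ?case by simp
  next
    case (Suc k)
    have st: "tau k < tau (Suc k)"
    proof (cases "k = 0")
      case True then show ?thesis using nodes tau0 by (simp add: radau_nodes_def)
    next
      case False then show ?thesis using nodes Suc.prems by (simp add: radau_nodes_def)
    qed
    show ?case
    proof (cases "i = k")
      case True then show ?thesis using st by simp
    next
      case False then show ?thesis using Suc st by simp
    qed
  qed
  have inj: "inj_on tau {0..N}"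
  proof (rule inj_onI)
    fix a b assume "a \<in> {0..N}" "b \<in> {0..N}" "tau a = tau b"
    then show "a = b" using lt[of a b] lt[of b a] by (metis atLeastAtMost_iff less_irrefl linorder_neqE_nat)
  qed
  have tauN: "tau N = 1" using nodes by (simp add: radau_nodes_def)
  have rng: "tau i \<in> {-1..1}" if "i \<in> {1..N}" for i
  proof -
    have "tau i \<le> 1" using lt[of i N] tauN that by (cases "i = N") auto
    moreover have "-1 \<le> tau i" using lt[of 0 i] tau0 that by auto
    ultimately show ?thesis by simp
  qed
  obtain M where M: "\<forall>i\<in>{1..N}. \<forall>k\<in>{1..N}. (\<Sum>j=1..N. radau_D tau N i j * M j k) = (if i = k then 1 else 0)"
    "\<forall>i\<in>{1..N}. \<forall>k\<in>{1..N}. (\<Sum>j=1..N. M i j * radau_D tau N j k) = (if i = k then 1 else 0)"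
    "\<forall>i\<in>{1..N}. (\<Sum>k=1..N. \<bar>M i k\<bar>) \<le> 2"
    using P1 unfolding radau_P1_def by blast
  show ?thesis
    apply (rule main_abs[where D = "radau_D tau N" and M = M and
          A = "\<lambda>i. jacobian (\<lambda>x. f (x, us (tau i))) (at (xs (tau i)))"])
    using N2 sum_D_zero[OF inj] M A3[OF rng] by auto
qed

end
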